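(* For an even integer $n>1$ and an integer $m\geq 3$, $$\chi_{ld}(P_{m}[\overline{K_{n}}])\leq \begin{cases}3 &\text{if $m$ is odd,}\\ 4 &\text{if $m$ is even.}\end{cases}$$
   Context: All graphs are finite, simple and undirected. For a graph $G=(V,E)$ of order $N$ without isolated vertices, a bijection $f\colon V\to\{1,2,\dots,N\}$ is a local distance antimagic labeling if $w(u)\neq w(v)$ for every edge $uv$, where $w(u)=\sum_{x\in N(u)}f(x)$ and $N(u)$ is the open neighborhood of $u$. $\chi_{ld}(G)$ is the minimum number of distinct weights over all local distance antimagic labelings of $G$. $P_m$ is the path on $m$ vertices, $\overline{K_n}$ the edgeless graph on $n$ vertices. The lexicographic product $G[H]$ has vertex set $V(G)\times V(H)$, with $(g,h)$ adjacent to $(g',h')$ iff $gg'\in E(G)$, or $g=g'$ and $hh'\in E(H)$. *)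

theory Defs
  imports Main
begin

text \<open>A finite simple graph is given by a finite vertex set V and a symmetric,
irreflexive adjacency relation adj (only its restriction to V matters).\<close>

definition nbr_weight :: "'a set \<Rightarrow> ('a \<Rightarrow> 'a \<Rightarrow> bool) \<Rightarrow> ('a \<Rightarrow> nat) \<Rightarrow> 'a \<Rightarrow> nat" where
  "nbr_weight V adj f u = (\<Sum>x\<in>{x\<in>V. adj u x}. f x)"

definition local_distance_antimagic ::
  "'a set \<Rightarrow> ('a \<Rightarrow> 'a \<Rightarrow> bool) \<Rightarrow> ('a \<Rightarrow> nat) \<Rightarrow> bool" where
  "local_distance_antimagic V adj f \<longleftrightarrow>
     bij_betw f V {1..card V} \<and>
     (\<forall>u\<in>V. \<forall>v\<in>V. adj u v \<longrightarrow> nbr_weight V adj f u \<noteq> nbr_weight V adj f v)"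

definition chi_ld :: "'a set \<Rightarrow> ('a \<Rightarrow> 'a \<Rightarrow> bool) \<Rightarrow> nat" where
  "chi_ld V adj = (LEAST k. \<exists>f. local_distance_antimagic V adj f \<and>
                              card (nbr_weight V adj f ` V) = k)"

definition path_adj :: "nat \<Rightarrow> nat \<Rightarrow> bool" where
  "path_adj i j \<longleftrightarrow> i = j + 1 \<or> j = i + 1"

text \<open>Lexicographic product P_m[complement K_n]: vertices (i,j), i<m, j<n;
(i,j) ~ (i',j') iff i ~ i' in P_m (the factor edgeless graph contributes no edges).\<close>
definition lexprod_verts :: "nat \<Rightarrow> nat \<Rightarrow> (nat \<times> nat) set" where
  "lexprod_verts m n = {0..<m} \<times> {0..<n}"

definition lex_product :: "('a \<Rightarrow> 'a \<Rightarrow> bool) \<Rightarrow> ('b \<Rightarrow> 'b \<Rightarrow> bool) \<Rightarrow> ('a \<times> 'b) \<Rightarrow> ('a \<times> 'b) \<Rightarrow> bool" where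
  "lex_product adjG adjH p q \<longleftrightarrow> adjG (fst p) (fst q) \<or> (fst p = fst q \<and> adjH (snd p) (snd q))"

definition edgeless_adj :: "nat \<Rightarrow> nat \<Rightarrow> bool" where
  "edgeless_adj i j \<longleftrightarrow> False"

definition lexprod_adj :: "(nat \<times> nat) \<Rightarrow> (nat \<times> nat) \<Rightarrow> bool" where
  "lexprod_adj = lex_product path_adj edgeless_adj"

end

theory Submission
  imports Defs
begin
lemma sum_pairs: "(\<Sum>j<2*h. g j) = (\<Sum>q<h. g (2*q) + g (2*q+1))" for g :: "nat \<Rightarrow> nat"
  by (induction h) (auto simp: lessThan_Suc)

lemma nbr_eq:
  fixes S :: "nat \<Rightarrow> nat" and f :: "nat \<times> nat \<Rightarrow> nat"
  assumes S: "\<And>i. S i = (\<Sum>j<n. f (i,j))" and "i < m" "m \<ge> 3"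
  shows "nbr_weight (lexprod_verts m n) lexprod_adj f (i,j) =
     (if 0 < i then S (i-1) else 0) + (if i+1 < m then S (i+1) else 0)"
proof -
  define I where "I = {i'. i' < m \<and> (i = i'+1 \<or> i' = i+1)}"
  have "{x \<in> lexprod_verts m n. lexprod_adj (i,j) x} = I \<times> {..<n}"
    by (auto simp: I_def lexprod_verts_def lexprod_adj_def lex_product_def path_adj_def edgeless_adj_def)
  then have "nbr_weight (lexprod_verts m n) lexprod_adj f (i,j) = (\<Sum>i'\<in>I. \<Sum>j<n. f (i',j))"
    by (simp add: nbr_weight_def sum.cartesian_product)
  also have "\<dots> = (\<Sum>i'\<in>I. S i')" using S by simp
  also have "\<dots> = (if 0 < i then S (i-1) else 0) + (if i+1 < m then S (i+1) else 0)"
  proof (cases "0 < i")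
    case True
    show ?thesis
    proof (cases "i+1 < m")
      case True
      with \<open>0<i\<close> have "I = {i-1, i+1}" by (auto simp: I_def)
      then show ?thesis using True \<open>0<i\<close> by simp
    next
      case False
      with \<open>0<i\<close> have "I = {i-1}" using assms by (auto simp: I_def)
      then show ?thesis using False \<open>0<i\<close> by simp
    qed
  next
    case False
    then have "I = {1}" using assms by (auto simp: I_def)
    then show ?thesis using False assms by simp
  qed
  finally show ?thesis .
qed

lemma generic:
  fixes m n h A B :: nat and p0 p1 :: "nat \<Rightarrow> nat"
  assumes n: "n = 2*h" "h \<ge> 1" and m: "m \<ge> 3"
  and p0: "inj_on p0 {..<m}" "\<And>i. i<m \<Longrightarrow> p0 i < m"
  and p1: "inj_on p1 {..<m}" "\<And>i. i<m \<Longrightarrow> p1 i < m"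
  and P: "\<And>i. i<m \<Longrightarrow> p0 i + p1 i = (if even i then A else B)"
  and AB: "A < B" "B < m + 2 + 2*A"
  shows "\<exists>f. local_distance_antimagic (lexprod_verts m n) lexprod_adj f \<and>
     card (nbr_weight (lexprod_verts m n) lexprod_adj f ` lexprod_verts m n) \<le> (if odd m then 3 else 4)"
proof -
  define pp where "pp (j::nat) (i::nat) = (if j = 0 then p0 i else if j = 1 then p1 i else if even j then i else m-1-i)" for j i
  define f where "f = (\<lambda>(i,j). j*m + pp j i + 1)"
  define V where "V = lexprod_verts m n"
  have pp_lt: "pp j i < m" if "i < m" for i j using that p0 p1 by (auto simp: pp_def)
  have pp_inj: "i = i'" if "i < m" "i' < m" "pp j i = pp j i'" for i i' j
  proof -
    consider "j = 0" | "j = 1" | "j \<noteq> 0 \<and> j \<noteq> 1 \<and> even j" | "j \<noteq> 0 \<and> j \<noteq> 1 \<and> odd j" by blast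
    then show ?thesis
    proof cases
      case 1 then show ?thesis using that p0(1) by (simp add: pp_def inj_on_def)
    next
      case 2 then show ?thesis using that p1(1) by (simp add: pp_def inj_on_def)
    next
      case 3 then show ?thesis using that by (simp add: pp_def)
    next
      case 4 then have "m-1-i = m-1-i'" using that by (simp add: pp_def)
      then show ?thesis using that by linarith
    qed
  qed
  have inj: "inj_on f V"
  proof (rule inj_onI)
    fix x y assume x: "x \<in> V" and y: "y \<in> V" and e: "f x = f y"
    obtain i j where xi: "x = (i,j)" "i<m" "j<n" using x by (auto simp: V_def lexprod_verts_def)
    obtain i' j' where yi: "y = (i',j')" "i'<m" "j'<n" using y by (auto simp: V_def lexprod_verts_def)
    have e2: "j*m + pp j i = j'*m + pp j' i'" using e xi yi by (simp add: f_def)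
    have "(j*m + pp j i) div m = j" using pp_lt[OF xi(2), of j] m
      by (metis add.commute div_mult_self1 div_less add_0_right not_numeral_le_zero zero_less_iff_neq_zero)
    moreover have "(j'*m + pp j' i') div m = j'" using pp_lt[OF yi(2), of j'] m
      by (metis add.commute div_mult_self1 div_less add_0_right not_numeral_le_zero zero_less_iff_neq_zero)
    ultimately have "j = j'" using e2 by metis
    with e2 have "pp j i = pp j i'" by simp
    with pp_inj xi yi have "i = i'" by blast
    with \<open>j = j'\<close> xi yi show "x = y" by simp
  qed
  have sub: "f ` V \<subseteq> {1..card V}"
  proof
    fix y assume "y \<in> f ` V"
    then obtain i j where y: "y = f (i,j)" "i<m" "j<n" by (auto simp: V_def lexprod_verts_def)
    have "pp j i \<le> m-1" using pp_lt[OF y(2), of j] by linarith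
    moreover have "j \<le> n-1" using y(3) by linarith
    ultimately have "j*m + pp j i + 1 \<le> (n-1)*m + (m-1) + 1"
      by (intro add_mono mult_right_mono) auto
    also have "\<dots> = n*m" using y m by (cases n) (auto simp: algebra_simps)
    finally show "y \<in> {1..card V}" using y by (simp add: f_def V_def lexprod_verts_def card_cartesian_product mult.commute)
  qed
  have bij: "bij_betw f V {1..card V}"
  proof -
    have "card (f ` V) = card V" using inj by (simp add: card_image)
    then have "f ` V = {1..card V}" using sub by (intro card_subset_eq) auto
    with inj show ?thesis by (simp add: bij_betw_def)
  qed
  define S where "S i = (\<Sum>j<n. f (i,j))" for i
  define c where "c q = (if q = 0 then m + 2 else (4*q+2)*m + 1)" for q
  define K where "K = (\<Sum>q<h. c q)"
  have K: "K \<ge> m + 2"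
  proof -
    have "c 0 \<le> K" unfolding K_def using n by (intro member_le_sum) auto
    then show ?thesis by (simp add: c_def)
  qed
  have S: "S i = K + (if even i then A else B)" if "i < m" for i
  proof -
    have "S i = (\<Sum>q<h. f (i, 2*q) + f (i, 2*q+1))" unfolding S_def n(1) by (rule sum_pairs)
    also have "\<dots> = (\<Sum>q<h. c q + (if q = 0 then p0 i + p1 i else 0))"
    proof (rule sum.cong)
      fix q assume "q \<in> {..<h}"
      show "f (i, 2*q) + f (i, 2*q+1) = c q + (if q = 0 then p0 i + p1 i else 0)"
      proof (cases "q = 0")
        case True then show ?thesis by (simp add: f_def pp_def c_def)
      next
        case False
        then have "f (i, 2*q) + f (i, 2*q+1) = 2*q*m + i + 1 + ((2*q+1)*m + (m-1-i) + 1)"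
          by (simp add: f_def pp_def)
        also have "\<dots> = 2*q*m + (2*q+1)*m + (i + (m-1-i)) + 2" by simp
        also have "i + (m-1-i) = m - 1" using that by simp
        also have "2*q*m + (2*q+1)*m + (m - 1) + 2 = c q" using False m by (simp add: c_def algebra_simps)
        finally show ?thesis using False by simp
      qed
    qed simp
    also have "\<dots> = K + (p0 i + p1 i)" using n by (simp add: sum.distrib K_def)
    finally show ?thesis using P[OF that] by simp
  qed
  define W where "W i = (if 0 < i then S (i-1) else 0) + (if i+1 < m then S (i+1) else 0)" for i
  have NW: "nbr_weight V lexprod_adj f (i,j) = W i" if "i < m" for i j
    unfolding V_def W_def by (rule nbr_eq[OF S_def that m])
  have W0: "W 0 = K + B" using m by (simp add: W_def S)
  have Wl: "W (m-1) = K + (if even (m-2) then A else B)" using m by (simp add: W_def S)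
  have Wi: "W i = 2*K + (if even i then 2*B else 2*A)" if "0 < i" "i+1 < m" for i
    using that by (auto simp: W_def S)
  have Wset: "W i \<in> {K+B, K + (if even (m-2) then A else B), 2*K+2*B, 2*K+2*A}" if iw: "i < m" for i
  proof -
    consider "i = 0" | "i = m-1" | "0 < i \<and> i+1 < m" using iw by linarith
    then show ?thesis using W0 Wl Wi by cases auto
  qed
  have Wne: "W i \<noteq> W (i+1)" if iw: "i+1 < m" for i
  proof -
    consider "i = 0" | "i + 2 = m" | "0 < i \<and> i+2 < m" using iw by linarith
    then show ?thesis
    proof cases
      case 1
      then show ?thesis using W0 Wi[of 1] m AB K by auto
    next
      case 2
      then have "m - 1 = i + 1" "m - 2 = i" by auto
      then show ?thesis using Wl Wi[of i] m AB K 2 by auto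
    next
      case 3
      then show ?thesis using Wi[of i] Wi[of "i+1"] AB by auto
    qed
  qed
  have lda: "local_distance_antimagic V lexprod_adj f"
    unfolding local_distance_antimagic_def
  proof (intro conjI bij ballI impI)
    fix u v assume u: "u \<in> V" and v: "v \<in> V" and a: "lexprod_adj u v"
    obtain i j where ui: "u = (i,j)" "i<m" using u by (auto simp: V_def lexprod_verts_def)
    obtain i' j' where vi: "v = (i',j')" "i'<m" using v by (auto simp: V_def lexprod_verts_def)
    have "i = i'+1 \<or> i' = i+1" using a ui vi
      by (simp add: lexprod_adj_def lex_product_def path_adj_def edgeless_adj_def)
    then show "nbr_weight V lexprod_adj f u \<noteq> nbr_weight V lexprod_adj f v"
      using Wne ui vi NW by (metis)
  qed
  define E where "E = (if even (m-2) then A else B)"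
  have img: "nbr_weight V lexprod_adj f ` V \<subseteq> {K+B, K + E, 2*K+2*B, 2*K+2*A}"
  proof
    fix y assume "y \<in> nbr_weight V lexprod_adj f ` V"
    then obtain i j where y: "y = nbr_weight V lexprod_adj f (i,j)" "i<m" by (auto simp: V_def lexprod_verts_def)
    then have "y = W i" using NW by simp
    then show "y \<in> {K+B, K + E, 2*K+2*B, 2*K+2*A}" using Wset[OF y(2)] unfolding E_def by blast
  qed
  have "card (nbr_weight V lexprod_adj f ` V) \<le> (if odd m then 3 else 4)"
  proof (cases "odd m")
    case True
    then have "E = B" unfolding E_def using m by auto
    then have sub3: "nbr_weight V lexprod_adj f ` V \<subseteq> {K+B, 2*K+2*B, 2*K+2*A}" using img by auto
    have "card {K+B, 2*K+2*B, 2*K+2*A} \<le> 3" by (simp add: card_insert_if)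
    with order_trans[OF card_mono[OF _ sub3]] True show ?thesis by simp
  next
    case False
    have "card {K+B, K + E, 2*K+2*B, 2*K+2*A} \<le> 4" by (simp add: card_insert_if)
    with order_trans[OF card_mono[OF _ img]] False show ?thesis by simp
  qed
  with lda show ?thesis unfolding V_def by blast
qed
lemma exists_lab:
  fixes m n :: nat
  assumes "even n" and "n > 1" and "m \<ge> 3"
  shows "\<exists>f. local_distance_antimagic (lexprod_verts m n) lexprod_adj f \<and>
     card (nbr_weight (lexprod_verts m n) lexprod_adj f ` lexprod_verts m n) \<le> (if odd m then 3 else 4)"
proof -
  obtain h where n: "n = 2*h" "h \<ge> 1" using assms by (metis evenE One_nat_def less_one linorder_not_le mult_0_right not_less_zero nat_neq_iff)
  show ?thesis
  proof (cases "even m")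
    case True
    define p1 where "p1 i = (if even i then m-2-i else m-i)" for i :: nat
    show ?thesis
    proof (rule generic[OF n assms(3), of id p1 "m-2" m])
      show "inj_on id {..<m}" by simp
      show "id i < m" if "i < m" for i using that by simp
      show "p1 i < m" if "i < m" for i using that assms(3) by (auto simp: p1_def elim: oddE)
      show "inj_on p1 {..<m}" unfolding inj_on_def p1_def using True assms(3) by auto presburger+
      show "id i + p1 i = (if even i then m-2 else m)" if "i < m" for i
        using that True assms(3) unfolding p1_def by auto presburger+
    qed (use assms(3) in auto)
  next
    case False
    then obtain k where k: "m = 2*k+1" by (metis oddE)
    have k1: "k \<ge> 1" using k assms(3) by simp
    define p0 where "p0 i = (if even i then i div 2 else k+1+i div 2)" for i :: nat
    define p1 where "p1 i = (if even i then k - i div 2 else 2*k - i div 2)" for i :: nat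
    show ?thesis
    proof (rule generic[OF n assms(3), of p0 p1 k "3*k+1"])
      have par: "(even i \<and> i = 2*(i div 2) \<and> i div 2 \<le> k) \<or> (odd i \<and> i = 2*(i div 2)+1 \<and> i div 2 < k)"
        if "i < m" for i using that k by (cases "even i") (auto elim!: evenE oddE)
      show "p0 i < m" if "i < m" for i using par[OF that] k unfolding p0_def by auto
      show "p1 i < m" if "i < m" for i using par[OF that] k unfolding p1_def by auto
      show "inj_on p0 {..<m}"
      proof (rule inj_onI)
        fix i i' assume "i \<in> {..<m}" "i' \<in> {..<m}" "p0 i = p0 i'"
        then show "i = i'" using par[of i] par[of i'] unfolding p0_def by (auto split: if_splits; metis odd_two_times_div_two_succ even_two_times_div_two)
      qed
      show "inj_on p1 {..<m}"
      proof (rule inj_onI)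
        fix i i' assume "i \<in> {..<m}" "i' \<in> {..<m}" "p1 i = p1 i'"
        then have e: "p1 i = p1 i'" and c: "(even i \<and> i = 2*(i div 2) \<and> i div 2 \<le> k) \<or> (odd i \<and> i = 2*(i div 2)+1 \<and> i div 2 < k)"
          "(even i' \<and> i' = 2*(i' div 2) \<and> i' div 2 \<le> k) \<or> (odd i' \<and> i' = 2*(i' div 2)+1 \<and> i' div 2 < k)"
          using par[of i] par[of i'] by auto
        obtain t t' where tt: "t = i div 2" "t' = i' div 2" by blast
        from c e show "i = i'" unfolding p1_def tt[symmetric]
        proof (elim disjE conjE)
          assume "even i" "even i'" "i = 2*t" "i' = 2*t'" "t \<le> k" "t' \<le> k"
            "(if even i then k - t else 2 * k - t) = (if even i' then k - t' else 2 * k - t')"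
          then show "i = i'" by simp
        next
          assume "odd i" "odd i'" "i = 2*t+1" "i' = 2*t'+1" "t < k" "t' < k"
            "(if even i then k - t else 2 * k - t) = (if even i' then k - t' else 2 * k - t')"
          then show "i = i'" by simp
        next
          assume "odd i" "even i'" "i = 2*t+1" "i' = 2*t'" "t < k" "t' \<le> k"
            "(if even i then k - t else 2 * k - t) = (if even i' then k - t' else 2 * k - t')"
          then show "i = i'" by simp
        next
          assume "even i" "odd i'" "i = 2*t" "i' = 2*t'+1" "t \<le> k" "t' < k"
            "(if even i then k - t else 2 * k - t) = (if even i' then k - t' else 2 * k - t')"
          then show "i = i'" by simp
        qed
      qed
      show "p0 i + p1 i = (if even i then k else 3*k+1)" if "i < m" for i
        using par[OF that] unfolding p0_def p1_def by auto
    qed (use k1 k in auto)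
  qed
qed

theorem mainTheorem10:
  fixes m n :: nat
  assumes "even n" and "n > 1" and "m \<ge> 3"
  shows "(\<exists>f. local_distance_antimagic (lexprod_verts m n) lexprod_adj f) \<and>
         chi_ld (lexprod_verts m n) lexprod_adj \<le> (if odd m then 3 else 4)"
proof -
  obtain f where f: "local_distance_antimagic (lexprod_verts m n) lexprod_adj f"
    "card (nbr_weight (lexprod_verts m n) lexprod_adj f ` lexprod_verts m n) \<le> (if odd m then 3 else 4)"
    using exists_lab[OF assms] by blast
  have "chi_ld (lexprod_verts m n) lexprod_adj \<le> card (nbr_weight (lexprod_verts m n) lexprod_adj f ` lexprod_verts m n)"
    unfolding chi_ld_def by (rule Least_le) (use f(1) in blast)
  with f show ?thesis by auto
qed
end
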